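(* Let $M$ be a real $m\times n$ matrix and let $\Lambda_1\geq\dotsb\geq\Lambda_n\geq 0$ be its singular values, i.e. $\Lambda_1^2\geq\dotsb\geq\Lambda_n^2$ are the eigenvalues of $M^TM$. (If $M$ is symmetric, the $\Lambda_i$ are the absolute values of its eigenvalues.) Let $k\leq\min(m,n)$ be a positive integer and let $\vec{\Delta}^{(k)}$ be the vector of all $k\times k$ minors of $M$, arranged in some order. Then, with all implied constants depending only on $m$ and $n$: (i) $\|\vec{\Delta}^{(k)}\|\asymp\Lambda_1\cdots\Lambda_k$, i.e. there are constants $a,A>0$ depending only on $m,n$ with $a\Lambda_1\cdots\Lambda_k\leq\|\vec{\Delta}^{(k)}\|\leq A\Lambda_1\cdots\Lambda_k$. (ii) There is a $k$-dimensional linear subspace $V\subset\mathbb{R}^n$, spanned by $k$ standard basis vectors of $\mathbb{R}^n$, such that $\|M\vec{v}\|\geq a'\|\vec{v}\|\Lambda_k$ for all $\vec{v}\in V$, where $a'>0$ depends only on $m,n$. (iii) There is a constant $a''>0$ depending only on $m,n$ such that for every $C\geq 1$, either there is an $(n-k+1)$-dimensional linear subspace $X\subset\mathbb{R}^n$ with $\|M\vec{X}\|\leq C^{-1}\|\vec{X}\|$ for all $\vec{X}\in X$, or there is a $k$-dimensional linear subspace $V\subset\mathbb{R}^n$, spanned by standard basis vectors of $\mathbb{R}^n$, with $\|M\vec{v}\|\geq a''C^{-1}\|\vec{v}\|$ for all $\vec{v}\in V$.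
   Context: $\|\cdot\|$ denotes the supremum (maximum absolute value of coordinates) norm. *)

theory Defs
  imports "Jordan_Normal_Form.Char_Poly" "Jordan_Normal_Form.VS_Connect"
    "Jordan_Normal_Form.DL_Rank_Submatrix"
begin

definition sup_norm :: "real vec \<Rightarrow> real" where
  "sup_norm v = Max (insert 0 {\<bar>v $ i\<bar> | i. i < dim_vec v})"

definition singular_values :: "real mat \<Rightarrow> real list \<Rightarrow> bool" where
  "singular_values M ls \<longleftrightarrow>
     length ls = dim_col M \<and> sorted_wrt (\<ge>) ls \<and> (\<forall>l\<in>set ls. l \<ge> 0) \<and>
     char_poly (transpose_mat M * M) = (\<Prod>l\<leftarrow>ls. [:- (l^2), 1:])"

text \<open>Sup norm of the vector of all k x k minors of M (the order is irrelevant).\<close>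
definition minors_norm :: "real mat \<Rightarrow> nat \<Rightarrow> real" where
  "minors_norm M k = Max {\<bar>det (submatrix M I J)\<bar> | I J.
       I \<subseteq> {..<dim_row M} \<and> card I = k \<and> J \<subseteq> {..<dim_col M} \<and> card J = k}"

definition subspace_dim :: "nat \<Rightarrow> nat \<Rightarrow> real vec set \<Rightarrow> bool" where
  "subspace_dim n d X \<longleftrightarrow> subspace class_ring X (module_vec TYPE(real) n) \<and>
     vectorspace.dim class_ring ((module_vec TYPE(real) n)\<lparr>carrier := X\<rparr>) = d"

definition coord_span :: "nat \<Rightarrow> nat set \<Rightarrow> real vec set" where
  "coord_span n J = {v \<in> carrier_vec n. \<forall>j<n. j \<notin> J \<longrightarrow> v $ j = 0}"

end

theory Submission
  imports Defs "Jordan_Normal_Form.Schur_Decomposition"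
begin


lemma det_mat_col:
  "det (mat k k F) = (\<Sum>p | p permutes {0..<k}. signof p * (\<Prod>j<k. F (p j, j)))"
  by (subst det_col[of _ k], auto intro!: sum.cong prod.cong)

lemma det_expand:
  fixes c Y :: "nat \<Rightarrow> nat \<Rightarrow> real"
  assumes T: "finite T"
  shows "det (mat k k (\<lambda>(i,j). \<Sum>t\<in>T. c j t * Y i t)) =
    (\<Sum>f\<in>{..<k} \<rightarrow>\<^sub>E T. (\<Prod>j<k. c j (f j)) * det (mat k k (\<lambda>(i,j). Y i (f j))))"
proof -
  let ?P = "{p. p permutes {0..<k}}"
  have "det (mat k k (\<lambda>(i,j). \<Sum>t\<in>T. c j t * Y i t)) =
     (\<Sum>p\<in>?P. signof p * (\<Prod>j<k. \<Sum>t\<in>T. c j t * Y (p j) t))"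
    by (simp add: det_mat_col)
  also have "\<dots> = (\<Sum>p\<in>?P. signof p * (\<Sum>f\<in>{..<k} \<rightarrow>\<^sub>E T. \<Prod>j<k. c j (f j) * Y (p j) (f j)))"
    by (rule sum.cong[OF refl], subst prod_sum_PiE, use T in auto)
  also have "\<dots> = (\<Sum>p\<in>?P. \<Sum>f\<in>{..<k} \<rightarrow>\<^sub>E T. (\<Prod>j<k. c j (f j)) * (signof p * (\<Prod>j<k. Y (p j) (f j))))"
    by (simp add: sum_distrib_left prod.distrib mult_ac)
  also have "\<dots> = (\<Sum>f\<in>{..<k} \<rightarrow>\<^sub>E T. \<Sum>p\<in>?P. (\<Prod>j<k. c j (f j)) * (signof p * (\<Prod>j<k. Y (p j) (f j))))"
    by (rule sum.swap)
  also have "\<dots> = (\<Sum>f\<in>{..<k} \<rightarrow>\<^sub>E T. (\<Prod>j<k. c j (f j)) * det (mat k k (\<lambda>(i,j). Y i (f j))))"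
    by (simp add: det_mat_col sum_distrib_left)
  finally show ?thesis .
qed

lemma card_permutes_k: "card {p. p permutes {0..<k}} = fact k"
  using card_permutations[of "{0..<k}" k] by simp

lemma det_col_bound:
  fixes F :: "nat \<times> nat \<Rightarrow> real"
  assumes "\<And>i j. i < k \<Longrightarrow> j < k \<Longrightarrow> \<bar>F (i,j)\<bar> \<le> b j"
  shows "\<bar>det (mat k k F)\<bar> \<le> fact k * (\<Prod>j<k. b j)"
proof -
  let ?P = "{p. p permutes {0..<k}}"
  have fin: "finite ?P" by (rule finite_permutations, simp)
  have "\<bar>det (mat k k F)\<bar> \<le> (\<Sum>p\<in>?P. \<bar>signof p * (\<Prod>j<k. F (p j, j))\<bar>)"
    unfolding det_mat_col by (rule sum_abs)
  also have "\<dots> \<le> (\<Sum>p\<in>?P. (\<Prod>j<k. b j))"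
  proof (rule sum_mono)
    fix p assume p: "p \<in> ?P"
    have pj: "j < k \<Longrightarrow> p j < k" for j using p permutes_in_image[of p "{0..<k}" j] by auto
    have "\<bar>signof p * (\<Prod>j<k. F (p j, j))\<bar> = (\<Prod>j<k. \<bar>F (p j, j)\<bar>)"
      by (simp add: abs_mult abs_prod sign_def)
    also have "\<dots> \<le> (\<Prod>j<k. b j)"
      by (rule prod_mono, auto intro: assms pj)
    finally show "\<bar>signof p * (\<Prod>j<k. F (p j, j))\<bar> \<le> (\<Prod>j<k. b j)" .
  qed
  also have "\<dots> = fact k * (\<Prod>j<k. b j)" using card_permutes_k[of k] by simp
  finally show ?thesis .
qed

lemma det_noninj_cols:
  fixes Y :: "nat \<Rightarrow> nat \<Rightarrow> real"
  assumes "\<not> inj_on f {..<k}"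
  shows "det (mat k k (\<lambda>(i,j). Y i (f j))) = 0"
proof -
  from assms obtain a b where ab: "a < k" "b < k" "a \<noteq> b" "f a = f b"
    unfolding inj_on_def by auto
  show ?thesis
    by (rule det_identical_columns[of _ k a b], use ab in auto)
qed

lemma det_noninj_rows:
  fixes Y :: "nat \<Rightarrow> nat \<Rightarrow> real"
  assumes "\<not> inj_on g {..<k}"
  shows "det (mat k k (\<lambda>(i,j). Y (g i) j)) = 0"
proof -
  from assms obtain a b where ab: "a < k" "b < k" "a \<noteq> b" "g a = g b"
    unfolding inj_on_def by auto
  show ?thesis
    by (rule det_identical_rows[of _ k a b], use ab in auto)
qed

lemma det_col_scale:
  fixes Y :: "nat \<Rightarrow> nat \<Rightarrow> real"
  shows "det (mat k k (\<lambda>(i,j). Y i j * d j)) = (\<Prod>j<k. d j) * det (mat k k (\<lambda>(i,j). Y i j))"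
  by (simp add: det_mat_col sum_distrib_left prod.distrib mult_ac)

lemma det_transpose_fun:
  fixes Y :: "nat \<Rightarrow> nat \<Rightarrow> real"
  shows "det (mat k k (\<lambda>(i,j). Y j i)) = det (mat k k (\<lambda>(i,j). Y i j))"
proof -
  have "mat k k (\<lambda>(i,j). Y j i) = transpose_mat (mat k k (\<lambda>(i,j). Y i j))"
    by auto
  then show ?thesis using det_transpose[of "mat k k (\<lambda>(i,j). Y i j)" k] by simp
qed


definition dmat :: "nat \<Rightarrow> real list \<Rightarrow> real mat" where
  "dmat n es = mat n n (\<lambda>(i,j). if i = j then es ! i else 0)"

lemma real_cscalar: "(v :: real vec) \<bullet>c w = v \<bullet> w"
  unfolding scalar_prod_def by (simp add: conjugate_real_def)

lemma fb_mult:
  fixes A B X Y :: "real mat"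
  assumes A: "A \<in> carrier_mat 1 1" and B: "B \<in> carrier_mat 1 1"
    and X: "X \<in> carrier_mat k k" and Y: "Y \<in> carrier_mat k k"
  shows "four_block_mat A (0\<^sub>m 1 k) (0\<^sub>m k 1) X * four_block_mat B (0\<^sub>m 1 k) (0\<^sub>m k 1) Y
     = four_block_mat (A * B) (0\<^sub>m 1 k) (0\<^sub>m k 1) (X * Y)"
  apply (subst mult_four_block_mat[OF A _ _ X B _ _ Y])
  prefer 3
  apply (rule cong_four_block_mat)
  using A B X Y by auto

lemma spectral:
  fixes G :: "real mat"
  assumes "G \<in> carrier_mat n n" "transpose_mat G = G"
    "char_poly G = (\<Prod>e\<leftarrow>es. [:- e, 1:])"
  shows "length es = n \<and> (\<exists>U. U \<in> carrier_mat n n \<and> transpose_mat U * U = 1\<^sub>m n \<and>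
     transpose_mat U * G * U = dmat n es)"
  using assms
proof (induct es arbitrary: n G)
  case Nil
  with degree_monic_char_poly[of G n] have n: "n = 0" by auto
  show ?case
    by (rule conjI, use n in simp, rule exI[of _ "1\<^sub>m 0"], use n Nil in \<open>auto simp: dmat_def\<close>)
next
  case (Cons e es n G)
  from Cons have G: "G \<in> carrier_mat n n" and Gs: "transpose_mat G = G" by auto
  let ?n1 = "n - 1"
  from Cons(4)
  have cp: "char_poly G = [: -e, 1 :] * (\<Prod>e \<leftarrow> es. [:- e, 1:])" by auto
  have mon: "monic (\<Prod>e\<leftarrow> es. [:- e, 1:])" by (rule monic_prod_list, auto)
  have deg: "degree (char_poly G) = Suc (degree (\<Prod>e\<leftarrow> es. [:- e, 1:]))" unfolding cp
    by (subst degree_mult_eq, insert mon, auto)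
  with degree_monic_char_poly[OF G] have n: "n \<noteq> 0" by auto
  define v where "v = find_eigenvector G e"
  define b where "b = basis_completion v"
  define ws where "ws = gram_schmidt n b"
  have e: "eigenvalue G e" 
    unfolding eigenvalue_root_char_poly[OF G] cp by simp
  from find_eigenvector[OF G e] have ev: "eigenvector G v e" unfolding v_def .
  from this[unfolded eigenvector_def]
  have v[simp]: "v \<in> carrier_vec n" and v0: "v \<noteq> 0\<^sub>v n" and Gv: "G *\<^sub>v v = e \<cdot>\<^sub>v v"
    using G by auto
  interpret cof_vec_space n "TYPE(real)" .
  from basis_completion[OF v v0, folded b_def]
  have span_b: "span (set b) = carrier_vec n" and dist_b: "distinct b" 
    and indep: "\<not> lin_dep (set b)" and b: "set b \<subseteq> carrier_vec n" and hdb: "hd b = v" 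
    and len_b: "length b = n" by auto
  from hdb len_b n obtain vs where bv: "b = v # vs" by (cases b, auto)
  from gram_schmidt_result[OF b dist_b indep refl, folded ws_def]
  have ws: "set ws \<subseteq> carrier_vec n" "corthogonal ws" "length ws = n" 
    by (auto simp: len_b)
  from gram_schmidt_hd[OF v, of vs, folded bv] have hdws: "hd ws = v" unfolding ws_def .
  have wsi: "i < n \<Longrightarrow> ws ! i \<in> carrier_vec n" for i using ws(1,3) nth_mem by blast
  have orth: "i < n \<Longrightarrow> j < n \<Longrightarrow> (ws ! i \<bullet> ws ! j = 0) = (i \<noteq> j)" for i j
    using ws(2,3) unfolding corthogonal_def real_cscalar by auto
  have pos: "i < n \<Longrightarrow> ws ! i \<bullet> ws ! i > 0" for i
  proof -
    assume i: "i < n"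
    have "ws ! i \<bullet> ws ! i \<ge> 0"
      unfolding scalar_prod_def by (rule sum_nonneg, auto)
    with orth[OF i i] show ?thesis by auto
  qed
  define nr where "nr = (\<lambda>i. 1 / sqrt (ws ! i \<bullet> ws ! i))"
  define us where "us = map (\<lambda>i. nr i \<cdot>\<^sub>v (ws ! i)) [0..<n]"
  have us_len: "length us = n" unfolding us_def by simp
  have usi: "i < n \<Longrightarrow> us ! i = nr i \<cdot>\<^sub>v (ws ! i)" for i unfolding us_def by simp
  have usc: "i < n \<Longrightarrow> us ! i \<in> carrier_vec n" for i using usi wsi by auto
  have us_orth: "i < n \<Longrightarrow> j < n \<Longrightarrow> us ! i \<bullet> us ! j = (if i = j then 1 else 0)" for i j
  proof -
    assume i: "i < n" and j: "j < n"
    have "us ! i \<bullet> us ! j = nr i * nr j * (ws ! i \<bullet> ws ! j)"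
      using usi[OF i] usi[OF j] wsi[OF i] wsi[OF j] by (simp add: mult_ac)
    also have "\<dots> = (if i = j then 1 else 0)"
    proof (cases "i = j")
      case True
      with pos[OF i] show ?thesis unfolding nr_def 
        by (simp add: field_simps real_sqrt_mult[symmetric])
    next
      case False
      with orth[OF i j] show ?thesis by simp
    qed
    finally show ?thesis .
  qed
  define W where "W = mat_of_cols n us"
  have W: "W \<in> carrier_mat n n" unfolding W_def using us_len by auto
  have colW: "i < n \<Longrightarrow> col W i = us ! i" for i
    unfolding W_def by (rule col_mat_of_cols, use us_len usc in auto)
  have WTW: "transpose_mat W * W = 1\<^sub>m n"
    by (rule eq_matI, use W in \<open>auto simp: colW us_orth\<close>)
  have WWT: "W * transpose_mat W = 1\<^sub>m n"
    by (rule mat_mult_left_right_inverse[OF _ W WTW], use W in auto)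
  have u0: "us ! 0 = nr 0 \<cdot>\<^sub>v v" using usi[of 0] n hdws ws(3) by (cases ws, auto)
  have Gu: "G *\<^sub>v (us ! 0) = e \<cdot>\<^sub>v (us ! 0)"
    unfolding u0 using G Gv by (simp add: mult_mat_vec smult_smult_assoc mult.commute)
  define A' where "A' = transpose_mat W * G * W"
  have A': "A' \<in> carrier_mat n n" unfolding A'_def using W G by auto
  have A'0: "i < n \<Longrightarrow> A' $$ (i, 0) = (if i = 0 then e else 0)" for i
  proof -
    assume i: "i < n"
    have "A' $$ (i,0) = (transpose_mat W * (G * W)) $$ (i,0)"
      unfolding A'_def using W G by (simp add: assoc_mult_mat[of _ n n _ n _ n])
    also have "\<dots> = row (transpose_mat W) i \<bullet> col (G * W) 0"
      by (rule index_mult_mat(1), use W G i n in auto)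
    also have "\<dots> = col W i \<bullet> (G *\<^sub>v col W 0)"
      by (subst row_transpose, use W i in simp, subst col_mult2[of _ n n _ n], use W G n in auto)
    also have "\<dots> = us ! i \<bullet> (e \<cdot>\<^sub>v (us ! 0))" using i n by (simp add: colW Gu)
    also have "\<dots> = e * (us ! i \<bullet> us ! 0)" using usc[OF i] usc[of 0] n by (simp add: scalar_prod_smult_right)
    also have "\<dots> = (if i = 0 then e else 0)" using us_orth i n by simp
    finally show ?thesis .
  qed
  have A'sym: "transpose_mat A' = A'"
  proof -
    have "transpose_mat (transpose_mat W * G * W) = transpose_mat W * transpose_mat (transpose_mat W * G)"
      using W G by (subst transpose_mult[of _ n n _ n], auto)
    also have "transpose_mat (transpose_mat W * G) = transpose_mat G * W"
      using W G by (subst transpose_mult[of _ n n _ n], auto)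
    finally show ?thesis unfolding A'_def Gs using W G by (simp add: assoc_mult_mat[of _ n n _ n _ n])
  qed
  have A'0': "j < n \<Longrightarrow> A' $$ (0, j) = (if j = 0 then e else 0)" for j
  proof -
    assume j: "j < n"
    have "A' $$ (0,j) = transpose_mat A' $$ (j, 0)" using A' j n by simp
    then show ?thesis using A'sym A'0[OF j] by simp
  qed
  define A1 where "A1 = mat 1 1 (\<lambda>_. e)"
  define A3 where "A3 = mat ?n1 ?n1 (\<lambda>(i,j). A' $$ (Suc i, Suc j))"
  have A3: "A3 \<in> carrier_mat ?n1 ?n1" unfolding A3_def by simp
  have A1: "A1 \<in> carrier_mat 1 1" unfolding A1_def by simp
  have A'block: "A' = four_block_mat A1 (0\<^sub>m 1 ?n1) (0\<^sub>m ?n1 1) A3"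
  proof (rule eq_matI)
    fix i j assume i: "i < dim_row (four_block_mat A1 (0\<^sub>m 1 ?n1) (0\<^sub>m ?n1 1) A3)"
      and j: "j < dim_col (four_block_mat A1 (0\<^sub>m 1 ?n1) (0\<^sub>m ?n1 1) A3)"
    then have i': "i < n" and j': "j < n" using n A1 A3 by auto
    show "A' $$ (i, j) = four_block_mat A1 (0\<^sub>m 1 ?n1) (0\<^sub>m ?n1 1) A3 $$ (i, j)"
      using i j i' j' A'0 A'0' n A1 A3
      by (cases i; cases j; auto simp: A1_def A3_def)
  qed (use A' n A1 A3 in auto)
  have A3s: "transpose_mat A3 = A3"
  proof (rule eq_matI)
    fix i j assume ij: "i < dim_row A3" "j < dim_col A3"
    then have ij': "Suc i < n" "Suc j < n" using A3 by auto
    have "A' $$ (Suc j, Suc i) = transpose_mat A' $$ (Suc i, Suc j)"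
      using ij' A' by simp
    also have "\<dots> = A' $$ (Suc i, Suc j)" using A'sym by simp
    finally show "transpose_mat A3 $$ (i, j) = A3 $$ (i, j)"
      using ij A3 by (simp add: A3_def)
  qed (use A3 in auto)
  have sim: "similar_mat A' G"
    unfolding similar_mat_def similar_mat_wit_def
    by (rule exI[of _ "transpose_mat W"], rule exI[of _ W], use W G A' WTW WWT in \<open>auto simp: A'_def Let_def\<close>)
  from cp char_poly_similar[OF sim]
  have cp': "char_poly A' = [: -e,1 :] * (\<Prod> e \<leftarrow> es. [:- e, 1:])" by simp
  also have "char_poly A' = char_poly A1 * char_poly A3" 
    unfolding A'block
    by (rule char_poly_four_block_zeros_col[OF A1 _ A3], auto)
  also have "char_poly A1 = [: -e,1 :]"
    by (simp add: A1_def char_poly_defs det_def sign_def)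
  finally have cp3: "char_poly A3 = (\<Prod> e \<leftarrow> es. [:- e, 1:])"
    by (metis mult_cancel_left pCons_eq_0_iff zero_neq_one)
  from Cons(1)[OF A3 A3s cp3] obtain U' where len: "length es = ?n1" and U': "U' \<in> carrier_mat ?n1 ?n1"
    and U'U': "transpose_mat U' * U' = 1\<^sub>m ?n1" and U'A: "transpose_mat U' * A3 * U' = dmat ?n1 es"
    by auto
  define F where "F = four_block_mat (1\<^sub>m 1) (0\<^sub>m 1 ?n1) (0\<^sub>m ?n1 1) U'"
  have n1: "1 + ?n1 = n" using n by simp
  have F: "F \<in> carrier_mat n n" unfolding F_def using U' n
    by (metis four_block_carrier_mat one_carrier_mat n1)
  have FT: "transpose_mat F = four_block_mat (1\<^sub>m 1) (0\<^sub>m 1 ?n1) (0\<^sub>m ?n1 1) (transpose_mat U')"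
    unfolding F_def by (subst transpose_four_block_mat, use U' in auto)
  have FTc: "transpose_mat F \<in> carrier_mat n n" using F by simp
  have WTc: "transpose_mat W \<in> carrier_mat n n" using W by simp
  define U where "U = W * F"
  have U: "U \<in> carrier_mat n n" unfolding U_def using W F by auto
  have WF: "W * F \<in> carrier_mat n n" using W F by auto
  have UT: "transpose_mat U = transpose_mat F * transpose_mat W"
    unfolding U_def using W F by (simp add: transpose_mult)
  have "transpose_mat U * U = transpose_mat F * transpose_mat W * (W * F)"
    by (subst UT, simp add: U_def)
  also have "\<dots> = transpose_mat F * (transpose_mat W * (W * F))"
    by (rule assoc_mult_mat[OF FTc WTc WF])
  also have "transpose_mat W * (W * F) = transpose_mat W * W * F"
    by (rule assoc_mult_mat[OF WTc W F, symmetric])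
  also have "\<dots> = F" using F by (simp add: WTW)
  also have "transpose_mat F * F = four_block_mat (1\<^sub>m 1 * 1\<^sub>m 1) (0\<^sub>m 1 ?n1) (0\<^sub>m ?n1 1) (transpose_mat U' * U')"
    unfolding FT unfolding F_def by (rule fb_mult, use U' in auto)
  also have "\<dots> = 1\<^sub>m (1 + ?n1)" unfolding U'U' by simp
  also have "\<dots> = 1\<^sub>m n" using n1 by simp
  finally have UU: "transpose_mat U * U = 1\<^sub>m n" .
  have GWF: "G * (W * F) \<in> carrier_mat n n" using G WF by auto
  have WTG: "transpose_mat W * G \<in> carrier_mat n n" using G WTc by auto
  have "transpose_mat U * G * U = transpose_mat F * transpose_mat W * G * (W * F)"
    by (subst UT, simp add: U_def)
  also have "\<dots> = transpose_mat F * (transpose_mat W * G) * (W * F)"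
    by (subst assoc_mult_mat[OF FTc WTc G], rule refl)
  also have "\<dots> = transpose_mat F * ((transpose_mat W * G) * (W * F))"
    by (rule assoc_mult_mat[OF FTc WTG WF])
  also have "(transpose_mat W * G) * (W * F) = (transpose_mat W * G * W) * F"
    by (rule assoc_mult_mat[OF WTG W F, symmetric])
  also have "transpose_mat F * (transpose_mat W * G * W * F) = transpose_mat F * A' * F"
    unfolding A'_def[symmetric] by (rule assoc_mult_mat[OF FTc A' F, symmetric])
  also have "\<dots> = four_block_mat (1\<^sub>m 1 * A1 * 1\<^sub>m 1) (0\<^sub>m 1 ?n1) (0\<^sub>m ?n1 1) (transpose_mat U' * A3 * U')"
  proof -
    have "four_block_mat (1\<^sub>m 1) (0\<^sub>m 1 ?n1) (0\<^sub>m ?n1 1) (transpose_mat U') * four_block_mat A1 (0\<^sub>m 1 ?n1) (0\<^sub>m ?n1 1) A3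
      = four_block_mat (1\<^sub>m 1 * A1) (0\<^sub>m 1 ?n1) (0\<^sub>m ?n1 1) (transpose_mat U' * A3)"
      by (rule fb_mult, use U' A1 A3 in auto)
    moreover have "four_block_mat (1\<^sub>m 1 * A1) (0\<^sub>m 1 ?n1) (0\<^sub>m ?n1 1) (transpose_mat U' * A3) * four_block_mat (1\<^sub>m 1) (0\<^sub>m 1 ?n1) (0\<^sub>m ?n1 1) U'
      = four_block_mat (1\<^sub>m 1 * A1 * 1\<^sub>m 1) (0\<^sub>m 1 ?n1) (0\<^sub>m ?n1 1) (transpose_mat U' * A3 * U')"
      by (rule fb_mult, use U' A1 A3 in auto)
    ultimately show ?thesis unfolding FT unfolding F_def A'block by simp
  qed
  also have "\<dots> = dmat n (e # es)"
    unfolding U'A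
    by (rule eq_matI, use n len in \<open>auto simp: dmat_def A1_def\<close>)
  finally show ?case using len n U UU by auto
qed


lemma orth_cols:
  fixes U :: "real mat"
  assumes U: "U \<in> carrier_mat n n" and UU: "transpose_mat U * U = 1\<^sub>m n"
    and i: "i < n" and j: "j < n"
  shows "col U i \<bullet> col U j = (if i = j then 1 else 0)"
proof -
  have "(transpose_mat U * U) $$ (i,j) = row (transpose_mat U) i \<bullet> col U j"
    by (rule index_mult_mat(1), use U i j in auto)
  also have "\<dots> = col U i \<bullet> col U j" using U i by simp
  finally show ?thesis using UU i j by simp
qed

lemma span_cols_dim:
  fixes U :: "real mat"
  assumes U: "U \<in> carrier_mat n n" and UU: "transpose_mat U * U = 1\<^sub>m n" and T: "T \<subseteq> {..<n}"
  shows "\<exists>X. subspace_dim n (card T) X \<and>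
     (\<forall>x\<in>X. x \<in> carrier_vec n \<and> (\<forall>t<n. t \<notin> T \<longrightarrow> col U t \<bullet> x = 0))"
proof -
  interpret vec_space "TYPE(real)" n .
  define S where "S = col U ` T"
  have Sc: "S \<subseteq> carrier_vec n" unfolding S_def using U by auto
  have finT: "finite T" using T finite_subset by blast
  have finS: "finite S" unfolding S_def using finT by simp
  have colinj: "inj_on (col U) {..<n}"
  proof (rule inj_onI)
    fix i j assume i: "i \<in> {..<n}" and j: "j \<in> {..<n}" and eq: "col U i = col U j"
    have "col U i \<bullet> col U j = 1" using orth_cols[OF U UU, of i i] i eq by simp
    then show "i = j" using orth_cols[OF U UU, of i j] i j by (auto split: if_splits)
  qed
  have cardS: "card S = card T" unfolding S_def
    by (rule card_image, rule inj_on_subset[OF colinj], use T in auto)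
  have "det (transpose_mat U * U) = 1" using UU by simp
  then have "det U * det U = 1" using U by (simp add: det_mult[of _ n] det_transpose)
  then have "det U \<noteq> 0" by auto
  then have rk: "rank U = n" using det_rank_iff[OF U] by simp
  have dist: "distinct (cols U)"
    unfolding cols_def using U colinj by (simp add: distinct_map atLeast0LessThan)
  have li: "lin_indpt (set (cols U))" by (rule full_rank_lin_indpt[OF U rk dist])
  have "S \<subseteq> set (cols U)" unfolding S_def using U T by (auto simp: cols_def)
  then have liS: "lin_indpt S" using subset_li_is_li[OF li] by blast
  have max: "maximal S (\<lambda>T. T \<subseteq> S \<and> lin_indpt T)"
    unfolding maximal_def using liS by auto
  have dim: "vectorspace.dim class_ring (span_vs S) = card S"
    by (rule dim_span[OF Sc finS max])
  have sub: "subspace class_ring (span S) V" by (rule span_is_subspace[OF Sc])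
  have mem: "x \<in> carrier_vec n \<and> (\<forall>t<n. t \<notin> T \<longrightarrow> col U t \<bullet> x = 0)" if x: "x \<in> span S" for x
  proof -
    from x obtain a A where xA: "x = lincomb a A" and A: "finite A" "A \<subseteq> S"
      unfolding span_def by auto
    have Ac: "A \<subseteq> carrier_vec n" using A Sc by auto
    have xc: "x \<in> carrier_vec n" unfolding xA using lincomb_closed Ac by auto
    show ?thesis
    proof (intro conjI allI impI xc)
      fix t assume t: "t < n" "t \<notin> T"
      have "col U t \<bullet> x = (\<Sum>i<n. col U t $ i * x $ i)"
        using xc by (simp add: scalar_prod_def lessThan_atLeast0)
      also have "\<dots> = (\<Sum>i<n. col U t $ i * (\<Sum>v\<in>A. a v * v $ i))"
        by (rule sum.cong[OF refl], unfold xA, subst lincomb_index[OF _ Ac], auto)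
      also have "\<dots> = (\<Sum>v\<in>A. a v * (\<Sum>i<n. col U t $ i * v $ i))"
        by (simp add: sum_distrib_left sum_distrib_right mult_ac sum.swap[of _ A])
      also have "\<dots> = 0"
      proof (rule sum.neutral, rule ballI)
        fix v assume v: "v \<in> A"
        then obtain s where s: "s \<in> T" "v = col U s" using A unfolding S_def by auto
        have "(\<Sum>i<n. col U t $ i * v $ i) = col U t \<bullet> col U s"
          using s U by (simp add: scalar_prod_def lessThan_atLeast0)
        also have "\<dots> = 0" using orth_cols[OF U UU t(1), of s] s t T by auto
        finally show "a v * (\<Sum>i<n. col U t $ i * v $ i) = 0" by simp
      qed
      finally show "col U t \<bullet> x = 0" .
    qed
  qed
  show ?thesis
    by (rule exI[of _ "span S"], use sub dim cardS mem in \<open>auto simp: subspace_dim_def\<close>)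
qed


definition fmin :: "real mat \<Rightarrow> nat \<Rightarrow> (nat \<Rightarrow> nat) \<Rightarrow> (nat \<Rightarrow> nat) \<Rightarrow> real" where
  "fmin X k g f = det (mat k k (\<lambda>(i,j). X $$ (g i, f j)))"

lemma sq_le_sum: fixes x :: "nat \<Rightarrow> real" assumes "r < m" shows "(x r)^2 \<le> (\<Sum>i<m. (x i)^2)"
  by (rule member_le_sum, use assms in auto)

lemma prod_subset_le:
  fixes L :: "nat \<Rightarrow> real"
  assumes nn: "\<And>i. i < n \<Longrightarrow> L i \<ge> 0" and mono: "\<And>i j. i \<le> j \<Longrightarrow> j < n \<Longrightarrow> L j \<le> L i"
  shows "S \<subseteq> {..<n} \<Longrightarrow> card S = k \<Longrightarrow> (\<Prod>t\<in>S. L t) \<le> (\<Prod>i<k. L i)"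
proof (induct k arbitrary: S)
  case 0
  then have "finite S" using finite_subset by blast
  with 0 have "S = {}" by simp
  then show ?case by simp
next
  case (Suc k S)
  have fin: "finite S" using Suc(2) finite_subset by blast
  with Suc(3) have ne: "S \<noteq> {}" by auto
  define s where "s = Max S"
  have sS: "s \<in> S" unfolding s_def using fin ne by simp
  have sn: "s < n" using sS Suc(2) by auto
  have "S \<subseteq> {..s}" unfolding s_def using fin by auto
  then have "card S \<le> card {..s}" by (rule card_mono[rotated], simp)
  then have ks: "k \<le> s" using Suc(3) by simp
  have "(\<Prod>t\<in>S. L t) = L s * (\<Prod>t\<in>S - {s}. L t)" using fin sS by (simp add: prod.remove)
  also have "\<dots> \<le> L k * (\<Prod>i<k. L i)"
  proof (rule mult_mono)
    show "L s \<le> L k" using mono ks sn by auto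
    show "(\<Prod>t\<in>S - {s}. L t) \<le> (\<Prod>i<k. L i)"
      by (rule Suc(1), use Suc(2,3) fin sS in auto)
    show "0 \<le> L k" using nn ks sn by auto
    show "0 \<le> (\<Prod>t\<in>S - {s}. L t)" by (rule prod_nonneg, use nn Suc(2) in auto)
  qed
  also have "\<dots> = (\<Prod>i<Suc k. L i)" by (simp add: mult.commute)
  finally show ?case .
qed

lemma sum_abs_bound:
  fixes c d :: "'a \<Rightarrow> real" and B :: real
  assumes "finite A" "\<And>a. a \<in> A \<Longrightarrow> \<bar>c a\<bar> \<le> 1" "\<And>a. a \<in> A \<Longrightarrow> \<bar>d a\<bar> \<le> B"
  shows "\<bar>\<Sum>a\<in>A. c a * d a\<bar> \<le> card A * B"
proof -
  have "\<bar>\<Sum>a\<in>A. c a * d a\<bar> \<le> (\<Sum>a\<in>A. \<bar>c a * d a\<bar>)" by (rule sum_abs)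
  also have "\<dots> \<le> (\<Sum>a\<in>A. B)"
  proof (rule sum_mono)
    fix a assume a: "a \<in> A"
    have "\<bar>c a * d a\<bar> = \<bar>c a\<bar> * \<bar>d a\<bar>" by (simp add: abs_mult)
    also have "\<dots> \<le> 1 * B" by (rule mult_mono, use assms a in auto)
    finally show "\<bar>c a * d a\<bar> \<le> B" by simp
  qed
  finally show ?thesis by simp
qed

lemma exists_big:
  fixes c d :: "'a \<Rightarrow> real"
  assumes fin: "finite A" and B: "B > 0" and S: "\<bar>\<Sum>a\<in>A. c a * d a\<bar> \<ge> B"
    and c: "\<And>a. a \<in> A \<Longrightarrow> \<bar>c a\<bar> \<le> 1"
  shows "\<exists>a\<in>A. \<bar>d a\<bar> \<ge> B / card A"
proof (rule ccontr)
  assume "\<not> ?thesis"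
  then have lt: "\<And>a. a \<in> A \<Longrightarrow> \<bar>d a\<bar> < B / card A" by auto
  have ne: "A \<noteq> {}" using S B by auto
  then have cp: "card A > 0" using fin by auto
  have "\<bar>\<Sum>a\<in>A. c a * d a\<bar> \<le> (\<Sum>a\<in>A. \<bar>c a * d a\<bar>)" by (rule sum_abs)
  also have "\<dots> < (\<Sum>a\<in>A. B / card A)"
  proof (rule sum_strict_mono[OF fin ne])
    fix a assume a: "a \<in> A"
    have "\<bar>c a * d a\<bar> = \<bar>c a\<bar> * \<bar>d a\<bar>" by (simp add: abs_mult)
    also have "\<dots> \<le> 1 * \<bar>d a\<bar>" by (rule mult_right_mono, use c a in auto)
    also have "\<dots> < B / card A" using lt a by simp
    finally show "\<bar>c a * d a\<bar> < B / card A" .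
  qed
  also have "\<dots> = B" using cp by simp
  finally show False using S by simp
qed

lemma card_PiE_lt: "card ({..<k} \<rightarrow>\<^sub>E {..<n}) = n ^ k"
  by (simp add: card_PiE)

locale svd_set =
  fixes m n :: nat and M N U :: "real mat" and L :: "nat \<Rightarrow> real"
  assumes M: "M \<in> carrier_mat m n" and U: "U \<in> carrier_mat n n"
    and UU: "transpose_mat U * U = 1\<^sub>m n" and UUT: "U * transpose_mat U = 1\<^sub>m n"
    and Ndef: "N = M * U"
    and NN: "\<And>i j. i < n \<Longrightarrow> j < n \<Longrightarrow> (\<Sum>r<m. N $$ (r,i) * N $$ (r,j)) = (if i = j then (L i)^2 else 0)"
    and Lnn: "\<And>i. i < n \<Longrightarrow> L i \<ge> 0"
    and Lmono: "\<And>i j. i \<le> j \<Longrightarrow> j < n \<Longrightarrow> L j \<le> L i"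
begin

lemma N: "N \<in> carrier_mat m n" using M U Ndef by auto

lemma F2: "r < m \<Longrightarrow> j < n \<Longrightarrow> N $$ (r,j) = (\<Sum>t<n. M $$ (r,t) * U $$ (t,j))"
  unfolding Ndef using M U by (simp add: scalar_prod_def lessThan_atLeast0)

lemma NUT: "N * transpose_mat U = M"
proof -
  have "N * transpose_mat U = M * (U * transpose_mat U)"
    unfolding Ndef by (rule assoc_mult_mat[OF M U], use U in simp)
  then show ?thesis using UUT M by simp
qed

lemma F1: "r < m \<Longrightarrow> c < n \<Longrightarrow> M $$ (r,c) = (\<Sum>t<n. N $$ (r,t) * U $$ (c,t))"
proof -
  assume r: "r < m" and c: "c < n"
  have "M $$ (r,c) = (N * transpose_mat U) $$ (r,c)" using NUT by simp
  also have "\<dots> = (\<Sum>t<n. N $$ (r,t) * U $$ (c,t))"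
    using N U r c by (simp add: scalar_prod_def lessThan_atLeast0)
  finally show ?thesis .
qed

lemma F3: "i < n \<Longrightarrow> j < n \<Longrightarrow> \<bar>U $$ (i,j)\<bar> \<le> 1"
proof -
  assume i: "i < n" and j: "j < n"
  have "col U j \<bullet> col U j = 1" using orth_cols[OF U UU j j] by simp
  then have "(\<Sum>r<n. (U $$ (r,j))^2) = 1"
    using U j by (simp add: scalar_prod_def lessThan_atLeast0 power2_eq_square)
  with sq_le_sum[OF i, of "\<lambda>r. U $$ (r,j)"] have "(U $$ (i,j))^2 \<le> 1^2" by simp
  then show ?thesis by (simp add: abs_square_le_1)
qed

lemma F4: "r < m \<Longrightarrow> j < n \<Longrightarrow> \<bar>N $$ (r,j)\<bar> \<le> L j"
proof -
  assume r: "r < m" and j: "j < n"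
  have "(\<Sum>r<m. (N $$ (r,j))^2) = (L j)^2" using NN[OF j j] by (simp add: power2_eq_square)
  with sq_le_sum[OF r, of "\<lambda>r. N $$ (r,j)"] have "(N $$ (r,j))^2 \<le> (L j)^2" by simp
  then show ?thesis using power2_le_iff_abs_le[OF Lnn[OF j]] by simp
qed

lemma UB:
  assumes k: "k \<le> n" and g: "\<And>i. i < k \<Longrightarrow> g i < m" and h: "\<And>j. j < k \<Longrightarrow> h j < n"
  shows "\<bar>fmin M k g h\<bar> \<le> real n ^ k * fact k * (\<Prod>i<k. L i)"
proof -
  have eq: "mat k k (\<lambda>(i,j). M $$ (g i, h j)) = mat k k (\<lambda>(i,j). \<Sum>t\<in>{..<n}. U $$ (h j, t) * N $$ (g i, t))"
    by (rule eq_matI, auto simp: F1 g h mult.commute)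
  have "fmin M k g h = (\<Sum>f\<in>{..<k} \<rightarrow>\<^sub>E {..<n}. (\<Prod>j<k. U $$ (h j, f j)) * det (mat k k (\<lambda>(i,j). N $$ (g i, f j))))"
    unfolding fmin_def eq by (rule det_expand, simp)
  also have "\<bar>\<dots>\<bar> \<le> card ({..<k} \<rightarrow>\<^sub>E {..<n}) * (fact k * (\<Prod>i<k. L i))"
  proof (rule sum_abs_bound)
    fix f assume f: "f \<in> {..<k} \<rightarrow>\<^sub>E {..<n}"
    then have fn: "j < k \<Longrightarrow> f j < n" for j by auto
    have "\<bar>\<Prod>j<k. U $$ (h j, f j)\<bar> = (\<Prod>j<k. \<bar>U $$ (h j, f j)\<bar>)" by (simp add: abs_prod)
    also have "\<dots> \<le> 1" by (rule prod_le_1, use F3 h fn in auto)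
    finally show "\<bar>\<Prod>j<k. U $$ (h j, f j)\<bar> \<le> 1" .
    show "\<bar>det (mat k k (\<lambda>(i,j). N $$ (g i, f j)))\<bar> \<le> fact k * (\<Prod>i<k. L i)"
    proof (cases "inj_on f {..<k}")
      case False
      then have "det (mat k k (\<lambda>(i,j). N $$ (g i, f j))) = 0"
        by (rule det_noninj_cols)
      have "0 \<le> (\<Prod>i<k. L i)" by (rule prod_nonneg, use Lnn k in auto)
      then show ?thesis using \<open>det _ = 0\<close> by simp
    next
      case True
      have "\<bar>det (mat k k (\<lambda>(i,j). N $$ (g i, f j)))\<bar> \<le> fact k * (\<Prod>j<k. L (f j))"
        by (rule det_col_bound, use F4 g fn in auto)
      also have "(\<Prod>j<k. L (f j)) = (\<Prod>t\<in>f ` {..<k}. L t)"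
        using True by (simp add: prod.reindex)
      also have "\<dots> \<le> (\<Prod>i<k. L i)"
        by (rule prod_subset_le[OF Lnn Lmono], use fn True in \<open>auto simp: card_image\<close>)
      finally show ?thesis by simp
    qed
  qed (simp add: finite_PiE)
  also have "\<dots> = real n ^ k * fact k * (\<Prod>i<k. L i)" by (simp add: card_PiE_lt)
  finally show ?thesis .
qed

lemma LB:
  assumes km: "k \<le> m" and kn: "k \<le> n" and P: "(\<Prod>i<k. L i) > 0"
  shows "\<exists>g f. (\<forall>i<k. g i < m) \<and> (\<forall>j<k. f j < n) \<and> inj_on g {..<k} \<and> inj_on f {..<k} \<and>
     \<bar>fmin M k g f\<bar> \<ge> (\<Prod>i<k. L i) / (real m ^ k * real n ^ k)"
proof -
  let ?P = "\<Prod>i<k. L i"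
  have Lpos: "L i > 0" if i: "i < k" for i
  proof -
    have "L i \<noteq> 0"
    proof
      assume "L i = 0"
      then have "?P = 0" using i by (metis finite_lessThan lessThan_iff prod_zero_iff)
      with P show False by linarith
    qed
    then show ?thesis using Lnn[of i] i kn by auto
  qed
  define W where "W r j = N $$ (r,j) / L j" for r j
  have WW: "(\<Sum>r\<in>{..<m}. W r j * W r i) = (if i = j then 1 else 0)" if i: "i < k" and j: "j < k" for i j
  proof -
    have "(\<Sum>r\<in>{..<m}. W r j * W r i) = (\<Sum>r\<in>{..<m}. N $$ (r,i) * N $$ (r,j) / (L i * L j))"
      by (rule sum.cong[OF refl], simp add: W_def mult.commute)
    also have "\<dots> = (\<Sum>r<m. N $$ (r,i) * N $$ (r,j)) / (L i * L j)"
      by (rule sum_divide_distrib[symmetric])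
    also have "\<dots> = (if i = j then (L i)^2 else 0) / (L i * L j)"
      using NN[of i j] i j kn by simp
    also have "\<dots> = (if i = j then 1 else 0)"
    proof (cases "i = j")
      case True
      have "L i \<noteq> 0" using Lpos[OF i] by simp
      then show ?thesis using True by (simp add: power2_eq_square)
    qed simp
    finally show ?thesis .
  qed
  have Wb: "\<bar>W r j\<bar> \<le> 1" if r: "r < m" and j: "j < k" for r j
  proof -
    have Lj: "L j > 0" using Lpos[OF j] .
    have "\<bar>W r j\<bar> = \<bar>N $$ (r,j)\<bar> / L j" unfolding W_def using Lj by (simp add: abs_divide)
    also have "\<dots> \<le> 1" using F4[OF r, of j] j kn Lj by (simp add: divide_le_eq_1)
    finally show ?thesis .
  qed
  have "1 = det (1\<^sub>m k)" by simp
  also have "1\<^sub>m k = mat k k (\<lambda>(i,j). \<Sum>r\<in>{..<m}. W r j * W r i)"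
    by (rule eq_matI, auto simp: WW)
  also have "det \<dots> = (\<Sum>g\<in>{..<k} \<rightarrow>\<^sub>E {..<m}. (\<Prod>j<k. W (g j) j) * det (mat k k (\<lambda>(i,j). W (g j) i)))"
    by (rule det_expand, simp)
  finally have one: "\<bar>\<Sum>g\<in>{..<k} \<rightarrow>\<^sub>E {..<m}. (\<Prod>j<k. W (g j) j) * det (mat k k (\<lambda>(i,j). W (g j) i))\<bar> \<ge> 1"
    by simp
  have "\<exists>g\<in>{..<k} \<rightarrow>\<^sub>E {..<m}. \<bar>det (mat k k (\<lambda>(i,j). W (g j) i))\<bar> \<ge> 1 / card ({..<k} \<rightarrow>\<^sub>E {..<m})"
  proof (rule exists_big[OF _ _ one])
    fix g assume g: "g \<in> {..<k} \<rightarrow>\<^sub>E {..<m}"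
    have "\<bar>\<Prod>j<k. W (g j) j\<bar> = (\<Prod>j<k. \<bar>W (g j) j\<bar>)" by (simp add: abs_prod)
    also have "\<dots> \<le> 1" by (rule prod_le_1, use Wb g in auto)
    finally show "\<bar>\<Prod>j<k. W (g j) j\<bar> \<le> 1" .
  qed (simp_all add: finite_PiE)
  then obtain g where g: "g \<in> {..<k} \<rightarrow>\<^sub>E {..<m}"
    and gbig: "\<bar>det (mat k k (\<lambda>(i,j). W (g j) i))\<bar> \<ge> 1 / real m ^ k"
    by (auto simp: card_PiE_lt)
  have gm: "i < k \<Longrightarrow> g i < m" for i using g by auto
  have gbig': "\<bar>det (mat k k (\<lambda>(i,j). W (g i) j))\<bar> \<ge> 1 / real m ^ k"
    using gbig det_transpose_fun[of k "\<lambda>a b. W (g a) b"] by simp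
  have "mat k k (\<lambda>(i,j). N $$ (g i, j)) = mat k k (\<lambda>(i,j). W (g i) j * L j)"
    by (rule eq_matI, use Lpos in \<open>force simp: W_def\<close>, auto)
  then have NW: "det (mat k k (\<lambda>(i,j). N $$ (g i, j))) = ?P * det (mat k k (\<lambda>(i,j). W (g i) j))"
    using det_col_scale[of k "\<lambda>a b. W (g a) b" L] by simp
  have "\<bar>det (mat k k (\<lambda>(i,j). N $$ (g i, j)))\<bar> = ?P * \<bar>det (mat k k (\<lambda>(i,j). W (g i) j))\<bar>"
    unfolding NW using P by (simp add: abs_mult)
  also have "\<dots> \<ge> ?P * (1 / real m ^ k)" by (rule mult_left_mono[OF gbig'], use P in simp)
  finally have Nbig: "\<bar>det (mat k k (\<lambda>(i,j). N $$ (g i, j)))\<bar> \<ge> ?P / real m ^ k" by simp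
  have "mat k k (\<lambda>(i,j). N $$ (g i, j)) = mat k k (\<lambda>(i,j). \<Sum>t\<in>{..<n}. U $$ (t, j) * M $$ (g i, t))"
  proof (rule eq_matI)
    fix i j assume i: "i < dim_row (mat k k (\<lambda>(i,j). \<Sum>t\<in>{..<n}. U $$ (t, j) * M $$ (g i, t)))"
      and j: "j < dim_col (mat k k (\<lambda>(i,j). \<Sum>t\<in>{..<n}. U $$ (t, j) * M $$ (g i, t)))"
    have "N $$ (g i, j) = (\<Sum>t<n. M $$ (g i,t) * U $$ (t,j))"
      by (rule F2, use gm i j kn in auto)
    also have "\<dots> = (\<Sum>t\<in>{..<n}. U $$ (t, j) * M $$ (g i, t))"
      by (rule sum.cong, auto)
    finally show "mat k k (\<lambda>(i,j). N $$ (g i, j)) $$ (i, j) = mat k k (\<lambda>(i,j). \<Sum>t\<in>{..<n}. U $$ (t, j) * M $$ (g i, t)) $$ (i, j)"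
      using i j by simp
  qed auto
  then have "det (mat k k (\<lambda>(i,j). N $$ (g i, j))) =
     (\<Sum>f\<in>{..<k} \<rightarrow>\<^sub>E {..<n}. (\<Prod>j<k. U $$ (f j, j)) * det (mat k k (\<lambda>(i,j). M $$ (g i, f j))))"
    using det_expand[of "{..<n}" k "\<lambda>j t. U $$ (t, j)" "\<lambda>i t. M $$ (g i, t)"] by simp
  with Nbig have two: "\<bar>\<Sum>f\<in>{..<k} \<rightarrow>\<^sub>E {..<n}. (\<Prod>j<k. U $$ (f j, j)) * det (mat k k (\<lambda>(i,j). M $$ (g i, f j)))\<bar> \<ge> ?P / real m ^ k"
    by simp
  have mpos: "real m ^ k > 0" using km P by (cases "k = 0", auto)
  have "\<exists>f\<in>{..<k} \<rightarrow>\<^sub>E {..<n}. \<bar>det (mat k k (\<lambda>(i,j). M $$ (g i, f j)))\<bar> \<ge> ?P / real m ^ k / card ({..<k} \<rightarrow>\<^sub>E {..<n})"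
  proof (rule exists_big[OF _ _ two])
    fix f assume f: "f \<in> {..<k} \<rightarrow>\<^sub>E {..<n}"
    have "\<bar>\<Prod>j<k. U $$ (f j, j)\<bar> = (\<Prod>j<k. \<bar>U $$ (f j, j)\<bar>)" by (simp add: abs_prod)
    also have "\<dots> \<le> 1" by (rule prod_le_1, use F3 f kn in \<open>auto simp: PiE_iff\<close>)
    finally show "\<bar>\<Prod>j<k. U $$ (f j, j)\<bar> \<le> 1" .
  qed (use P mpos in \<open>simp_all add: finite_PiE\<close>)
  then obtain f where f: "f \<in> {..<k} \<rightarrow>\<^sub>E {..<n}"
    and fbig: "\<bar>det (mat k k (\<lambda>(i,j). M $$ (g i, f j)))\<bar> \<ge> ?P / (real m ^ k * real n ^ k)"
    by (auto simp: card_PiE_lt divide_divide_eq_left)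
  have fn: "j < k \<Longrightarrow> f j < n" for j using f by auto
  have pos: "\<bar>det (mat k k (\<lambda>(i,j). M $$ (g i, f j)))\<bar> > 0"
  proof -
    have "?P / (real m ^ k * real n ^ k) > 0"
    proof -
      have "real n ^ k > 0" using kn P by (cases "k = 0", auto)
      then show ?thesis using P mpos by simp
    qed
    then show ?thesis using fbig by linarith
  qed
  have finj: "inj_on f {..<k}"
  proof (rule ccontr)
    assume "\<not> inj_on f {..<k}"
    from det_noninj_cols[OF this, of "\<lambda>i t. M $$ (g i, t)"] pos show False by simp
  qed
  have ginj: "inj_on g {..<k}"
  proof (rule ccontr)
    assume "\<not> inj_on g {..<k}"
    from det_noninj_rows[OF this, of "\<lambda>r j. M $$ (r, f j)"] pos show False by simp
  qed
  show ?thesis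
    by (rule exI[of _ g], rule exI[of _ f], use gm fn finj ginj fbig in \<open>auto simp: fmin_def\<close>)
qed

end


lemma pick_lt: "I \<subseteq> {..<m} \<Longrightarrow> i < card I \<Longrightarrow> pick I i < m"
  using pick_in_set_le[of i I] by auto

lemma submatrix_eq:
  assumes M: "M \<in> carrier_mat m n" and I: "I \<subseteq> {..<m}" and J: "J \<subseteq> {..<n}"
    and cI: "card I = k" and cJ: "card J = k"
  shows "submatrix M I J = mat k k (\<lambda>(i,j). M $$ (pick I i, pick J j))"
proof -
  have "{i. i < dim_row M \<and> i \<in> I} = I" using M I by auto
  moreover have "{j. j < dim_col M \<and> j \<in> J} = J" using M J by auto
  ultimately show ?thesis unfolding submatrix_def using cI cJ by simp
qed

definition MS :: "real mat \<Rightarrow> nat \<Rightarrow> nat \<Rightarrow> nat \<Rightarrow> real set" where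
  "MS M m n k = {\<bar>det (submatrix M I J)\<bar> | I J.
       I \<subseteq> {..<m} \<and> card I = k \<and> J \<subseteq> {..<n} \<and> card J = k}"

lemma mn_MS: "M \<in> carrier_mat m n \<Longrightarrow> minors_norm M k = Max (MS M m n k)"
  unfolding minors_norm_def MS_def by auto

lemma MS_fin: "finite (MS M m n k)"
proof -
  have "MS M m n k \<subseteq> (\<lambda>(I,J). \<bar>det (submatrix M I J)\<bar>) ` (Pow {..<m} \<times> Pow {..<n})"
    unfolding MS_def by auto
  then show ?thesis by (rule finite_subset, simp)
qed

lemma MS_ne: "k \<le> m \<Longrightarrow> k \<le> n \<Longrightarrow> MS M m n k \<noteq> {}"
proof -
  assume k: "k \<le> m" "k \<le> n"
  have "\<bar>det (submatrix M {..<k} {..<k})\<bar> \<in> MS M m n k"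
    unfolding MS_def using k by force
  then show ?thesis by auto
qed

lemma mn_le:
  assumes M: "M \<in> carrier_mat m n" and k: "k \<le> m" "k \<le> n"
    and B: "\<And>I J. I \<subseteq> {..<m} \<Longrightarrow> card I = k \<Longrightarrow> J \<subseteq> {..<n} \<Longrightarrow> card J = k \<Longrightarrow>
       \<bar>det (submatrix M I J)\<bar> \<le> Bd"
  shows "minors_norm M k \<le> Bd"
  unfolding mn_MS[OF M] using MS_fin[of M m n k] MS_ne[OF k, of M] B
  by (subst Max_le_iff, auto simp: MS_def)

lemma mn_attained:
  assumes M: "M \<in> carrier_mat m n" and k: "k \<le> m" "k \<le> n"
  shows "\<exists>I J. I \<subseteq> {..<m} \<and> card I = k \<and> J \<subseteq> {..<n} \<and> card J = k \<and>
     minors_norm M k = \<bar>det (submatrix M I J)\<bar>"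
proof -
  have "Max (MS M m n k) \<in> MS M m n k" using MS_fin[of M m n k] MS_ne[OF k, of M] by simp
  then show ?thesis unfolding mn_MS[OF M] by (auto simp: MS_def)
qed

lemma mn_nonneg:
  assumes M: "M \<in> carrier_mat m n" and k: "k \<le> m" "k \<le> n"
  shows "minors_norm M k \<ge> 0"
  using mn_attained[OF assms] by auto

lemma perm_of_inj:
  assumes g: "inj_on g {..<k}"
  shows "\<exists>p. p permutes {0..<k} \<and> (\<forall>i<k. g i = pick (g ` {..<k}) (p i))"
proof -
  let ?I = "g ` {..<k}"
  define p where "p i = (if i < k then card {a \<in> ?I. a < g i} else i)" for i
  have finI: "finite ?I" by simp
  have cI: "card ?I = k" using g by (simp add: card_image)
  have pk: "p i < k" if i: "i < k" for i
  proof -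
    have "{a \<in> ?I. a < g i} \<subset> ?I" using i by auto
    then have "card {a \<in> ?I. a < g i} < card ?I" by (rule psubset_card_mono[OF finI])
    then show ?thesis using i cI by (simp add: p_def)
  qed
  have pg: "pick ?I (p i) = g i" if i: "i < k" for i
    using pick_card_in_set[of "g i" ?I] i by (simp add: p_def)
  have pinj: "inj_on p {0..<k}"
  proof (rule inj_onI)
    fix i j assume "i \<in> {0..<k}" "j \<in> {0..<k}" "p i = p j"
    then have "g i = g j" using pg by (metis atLeastLessThan_iff)
    with g \<open>i \<in> {0..<k}\<close> \<open>j \<in> {0..<k}\<close> show "i = j" by (auto simp: inj_on_def)
  qed
  have pim: "p ` {0..<k} = {0..<k}"
    by (rule endo_inj_surj[OF _ _ pinj], use pk in auto)
  have "p permutes {0..<k}"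
    by (rule bij_imp_permutes, unfold bij_betw_def, use pinj pim in simp, simp add: p_def)
  then show ?thesis using pg by auto
qed

lemma det_perm_both:
  fixes A :: "real mat"
  assumes A: "A \<in> carrier_mat k k" and p: "p permutes {0..<k}" and q: "q permutes {0..<k}"
  shows "\<bar>det (mat k k (\<lambda>(i,j). A $$ (p i, q j)))\<bar> = \<bar>det A\<bar>"
proof -
  define B where "B = mat k k (\<lambda>(i,j). A $$ (i, q j))"
  have B: "B \<in> carrier_mat k k" unfolding B_def by simp
  have qk: "j < k \<Longrightarrow> q j < k" for j using q permutes_in_image[of q "{0..<k}" j] by auto
  have pk: "i < k \<Longrightarrow> p i < k" for i using p permutes_in_image[of p "{0..<k}" i] by auto
  have "mat k k (\<lambda>(i,j). A $$ (p i, q j)) = mat k k (\<lambda>(i,j). B $$ (p i, j))"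
    by (rule eq_matI, auto simp: B_def pk)
  then have "det (mat k k (\<lambda>(i,j). A $$ (p i, q j))) = signof p * det B"
    using det_permute_rows[OF B p] by simp
  then have 1: "\<bar>det (mat k k (\<lambda>(i,j). A $$ (p i, q j)))\<bar> = \<bar>det B\<bar>"
    by (simp add: abs_mult sign_def)
  have "transpose_mat B = mat k k (\<lambda>(i,j). transpose_mat A $$ (q i, j))"
    by (rule eq_matI, use A qk in \<open>auto simp: B_def\<close>)
  then have "det (transpose_mat B) = signof q * det (transpose_mat A)"
    using det_permute_rows[of "transpose_mat A" k q] A q by simp
  then have "\<bar>det B\<bar> = \<bar>det A\<bar>" using A B by (simp add: det_transpose abs_mult sign_def)
  with 1 show ?thesis by simp
qed

lemma mn_ge:
  assumes M: "M \<in> carrier_mat m n" and k: "k \<le> m" "k \<le> n"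
    and g: "inj_on g {..<k}" "\<And>i. i < k \<Longrightarrow> g i < m"
    and f: "inj_on f {..<k}" "\<And>j. j < k \<Longrightarrow> f j < n"
  shows "\<bar>fmin M k g f\<bar> \<le> minors_norm M k"
proof -
  let ?I = "g ` {..<k}" and ?J = "f ` {..<k}"
  obtain p where p: "p permutes {0..<k}" and pg: "\<And>i. i < k \<Longrightarrow> g i = pick ?I (p i)"
    using perm_of_inj[OF g(1)] by auto
  obtain q where q: "q permutes {0..<k}" and qf: "\<And>j. j < k \<Longrightarrow> f j = pick ?J (q j)"
    using perm_of_inj[OF f(1)] by auto
  have I: "?I \<subseteq> {..<m}" "card ?I = k" using g by (auto simp: card_image)
  have J: "?J \<subseteq> {..<n}" "card ?J = k" using f by (auto simp: card_image)
  define D where "D = submatrix M ?I ?J"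
  have D: "D = mat k k (\<lambda>(i,j). M $$ (pick ?I i, pick ?J j))"
    unfolding D_def by (rule submatrix_eq[OF M I(1) J(1) I(2) J(2)])
  have Dc: "D \<in> carrier_mat k k" unfolding D by simp
  have qk: "j < k \<Longrightarrow> q j < k" for j using q permutes_in_image[of q "{0..<k}" j] by auto
  have pk: "i < k \<Longrightarrow> p i < k" for i using p permutes_in_image[of p "{0..<k}" i] by auto
  have "mat k k (\<lambda>(i,j). M $$ (g i, f j)) = mat k k (\<lambda>(i,j). D $$ (p i, q j))"
    by (rule eq_matI, auto simp: D pg qf pk qk)
  then have "\<bar>fmin M k g f\<bar> = \<bar>det D\<bar>"
    unfolding fmin_def using det_perm_both[OF Dc p q] by simp
  also have "\<dots> \<le> minors_norm M k"
    unfolding mn_MS[OF M] D_def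
    by (rule Max_ge[OF MS_fin], unfold MS_def, use I J in blast)
  finally show ?thesis .
qed


lemma sup_norm_fin: "finite {\<bar>v $ i\<bar> | i. i < dim_vec v}"
proof -
  have "{\<bar>v $ i\<bar> | i. i < dim_vec v} = (\<lambda>i. \<bar>v $ i\<bar>) ` {..<dim_vec v}" by auto
  then show ?thesis by simp
qed

lemma sup_norm_nonneg: "sup_norm v \<ge> 0"
  unfolding sup_norm_def using sup_norm_fin[of v] by (simp add: Max_ge_iff)

lemma sup_norm_ge: "i < dim_vec v \<Longrightarrow> \<bar>v $ i\<bar> \<le> sup_norm v"
  unfolding sup_norm_def using sup_norm_fin[of v] by (auto simp: Max_ge_iff)

lemma sup_norm_le: "0 \<le> c \<Longrightarrow> (\<And>i. i < dim_vec v \<Longrightarrow> \<bar>v $ i\<bar> \<le> c) \<Longrightarrow> sup_norm v \<le> c"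
  unfolding sup_norm_def using sup_norm_fin[of v] by (auto simp: Max_le_iff)

lemma pick_bij: "finite J \<Longrightarrow> bij_betw (pick J) {..<card J} J"
proof -
  assume fin: "finite J"
  have inj: "inj_on (pick J) {..<card J}"
  proof (rule inj_onI)
    fix a b assume a: "a \<in> {..<card J}" and b: "b \<in> {..<card J}" and eq: "pick J a = pick J b"
    show "a = b"
    proof (rule ccontr)
      assume "a \<noteq> b"
      then have "a < b \<or> b < a" by auto
      then show False using pick_mono_le[of b J a] pick_mono_le[of a J b] a b eq by auto
    qed
  qed
  have sub: "pick J ` {..<card J} \<subseteq> J" using pick_in_set_le by auto
  have "card (pick J ` {..<card J}) = card J" using inj by (simp add: card_image)
  then have "pick J ` {..<card J} = J" using card_subset_eq[OF fin sub] by simp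
  then show ?thesis using inj by (simp add: bij_betw_def)
qed

context svd_set
begin

lemma part2:
  assumes k1: "1 \<le> k" and km: "k \<le> m" and kn: "k \<le> n"
  shows "\<exists>J. J \<subseteq> {..<n} \<and> card J = k \<and> (\<forall>v\<in>coord_span n J.
     sup_norm (M *\<^sub>v v) \<ge> L (k-1) / (real m ^ k * real n ^ k * (real k * (real n ^ (k-1) * fact (k-1)))) * sup_norm v)"
proof (cases "L (k-1) = 0")
  case True
  show ?thesis
    by (rule exI[of _ "{..<k}"], use True kn in \<open>auto simp: sup_norm_nonneg\<close>)
next
  case False
  let ?L = "L (k-1)"
  have "k - 1 < n" using k1 kn by simp
  then have Lk: "?L > 0" using False Lnn[of "k-1"] by linarith
  have Lpos: "L i > 0" if i: "i < k" for i
  proof -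
    have "L (k-1) \<le> L i" by (rule Lmono, use i k1 kn in auto)
    then show ?thesis using Lk by linarith
  qed
  let ?Q = "\<Prod>i<k-1. L i"
  have Qpos: "?Q > 0" by (rule prod_pos, use Lpos in auto)
  have Pk: "(\<Prod>i<k. L i) = ?Q * ?L"
  proof -
    obtain k' where k': "k = Suc k'" using k1 by (cases k, auto)
    show ?thesis unfolding k' by simp
  qed
  have Ppos: "(\<Prod>i<k. L i) > 0" unfolding Pk using Qpos Lk by simp
  define c where "c = real m ^ k * real n ^ k"
  have cpos: "c > 0" unfolding c_def using km kn k1 by auto
  define \<Delta> where "\<Delta> = minors_norm M k"
  from LB[OF km kn Ppos] obtain g f where g: "\<forall>i<k. g i < m" "inj_on g {..<k}"
    and f: "\<forall>j<k. f j < n" "inj_on f {..<k}"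
    and big: "\<bar>fmin M k g f\<bar> \<ge> (\<Prod>i<k. L i) / c" unfolding c_def by blast
  have "\<bar>fmin M k g f\<bar> \<le> \<Delta>" unfolding \<Delta>_def
    by (rule mn_ge[OF M km kn g(2) _ f(2)], use g(1) f(1) in auto)
  then have Dbig: "\<Delta> \<ge> ?Q * ?L / c" using big unfolding Pk by linarith
  have "?Q * ?L / c > 0" using Qpos Lk cpos by simp
  then have Dpos: "\<Delta> > 0" using Dbig by linarith
  obtain I J where I: "I \<subseteq> {..<m}" "card I = k" and J: "J \<subseteq> {..<n}" "card J = k"
    and att: "\<Delta> = \<bar>det (submatrix M I J)\<bar>"
    using mn_attained[OF M km kn] unfolding \<Delta>_def by blast
  define D where "D = mat k k (\<lambda>(i,j). M $$ (pick I i, pick J j))"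
  have DD: "submatrix M I J = D" unfolding D_def by (rule submatrix_eq[OF M I(1) J(1) I(2) J(2)])
  have Dc: "D \<in> carrier_mat k k" unfolding D_def by simp
  have detD: "\<bar>det D\<bar> = \<Delta>" using att DD by simp
  have finJ: "finite J" using J finite_subset by blast
  have finI: "finite I" using I finite_subset by blast
  have pbJ: "bij_betw (pick J) {..<k} J" using pick_bij[OF finJ] J by simp
  have pIm: "i < k \<Longrightarrow> pick I i < m" for i using pick_lt[OF I(1)] I by simp
  have pJn: "j < k \<Longrightarrow> pick J j < n" for j using pick_lt[OF J(1)] J by simp
  define K1 where "K1 = real n ^ (k-1) * fact (k-1)"
  have cof: "\<bar>cofactor D i j\<bar> \<le> K1 * ?Q" if i: "i < k" and j: "j < k" for i j
  proof -
    define ii where "ii a = (if a < i then a else Suc a)" for a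
    define jj where "jj b = (if b < j then b else Suc b)" for b
    have "mat_delete D i j = mat (k-1) (k-1) (\<lambda>(a,b). M $$ (pick I (ii a), pick J (jj b)))"
      by (rule eq_matI, auto simp: mat_delete_def D_def ii_def jj_def)
    then have "det (mat_delete D i j) = fmin M (k-1) (\<lambda>a. pick I (ii a)) (\<lambda>b. pick J (jj b))"
      by (simp add: fmin_def)
    moreover have "\<bar>fmin M (k-1) (\<lambda>a. pick I (ii a)) (\<lambda>b. pick J (jj b))\<bar> \<le> K1 * ?Q"
    proof -
      have r1: "pick I (ii a) < m" if a: "a < k-1" for a by (rule pIm, use a in \<open>auto simp: ii_def\<close>)
      have r2: "pick J (jj b) < n" if b: "b < k-1" for b by (rule pJn, use b in \<open>auto simp: jj_def\<close>)
      show ?thesis unfolding K1_def by (rule UB[OF _ r1 r2], use kn in simp_all)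
    qed
    ultimately show ?thesis by (simp add: cofactor_def abs_mult)
  qed
  have K1pos: "K1 > 0" unfolding K1_def using kn k1 by auto
  show ?thesis
  proof (rule exI[of _ J], intro conjI ballI J)
    fix v assume v: "v \<in> coord_span n J"
    then have vc: "v \<in> carrier_vec n" and v0: "\<And>j. j < n \<Longrightarrow> j \<notin> J \<Longrightarrow> v $ j = 0"
      by (auto simp: coord_span_def)
    define w where "w = vec k (\<lambda>j. v $ pick J j)"
    have wc: "w \<in> carrier_vec k" unfolding w_def by simp
    let ?s = "sup_norm (M *\<^sub>v v)"
    have Dw: "(D *\<^sub>v w) $ i = (M *\<^sub>v v) $ (pick I i)" if i: "i < k" for i
    proof -
      have "(M *\<^sub>v v) $ (pick I i) = (\<Sum>c<n. M $$ (pick I i, c) * v $ c)"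
        using M vc pIm[OF i] by (simp add: scalar_prod_def lessThan_atLeast0)
      also have "\<dots> = (\<Sum>c\<in>J. M $$ (pick I i, c) * v $ c)"
        by (rule sum.mono_neutral_right, use J v0 in auto)
      also have "\<dots> = (\<Sum>j<k. M $$ (pick I i, pick J j) * v $ pick J j)"
        by (rule sum.reindex_bij_betw[OF pbJ, symmetric])
      also have "\<dots> = (D *\<^sub>v w) $ i"
        using i by (simp add: D_def w_def scalar_prod_def lessThan_atLeast0)
      finally show ?thesis by simp
    qed
    have Dws: "\<bar>(D *\<^sub>v w) $ i\<bar> \<le> ?s" if i: "i < k" for i
      unfolding Dw[OF i] by (rule sup_norm_ge, use M pIm[OF i] in simp)
    have adj: "adj_mat D *\<^sub>v (D *\<^sub>v w) = det D \<cdot>\<^sub>v w"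
    proof -
      have "adj_mat D *\<^sub>v (D *\<^sub>v w) = (adj_mat D * D) *\<^sub>v w"
        by (rule assoc_mult_mat_vec[symmetric], use adj_mat(1)[OF Dc] Dc wc in auto)
      also have "\<dots> = det D \<cdot>\<^sub>v w" using adj_mat(3)[OF Dc] wc by auto
      finally show ?thesis .
    qed
    have wb: "\<bar>w $ j\<bar> \<le> real k * K1 * ?Q * ?s / \<Delta>" if j: "j < k" for j
    proof -
      have "det D * w $ j = (adj_mat D *\<^sub>v (D *\<^sub>v w)) $ j" using adj j wc by simp
      also have "\<dots> = (\<Sum>i<k. adj_mat D $$ (j,i) * (D *\<^sub>v w) $ i)"
        using adj_mat(1)[OF Dc] Dc wc j by (simp add: scalar_prod_def lessThan_atLeast0)
      finally have eq: "det D * w $ j = (\<Sum>i<k. adj_mat D $$ (j,i) * (D *\<^sub>v w) $ i)" .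
      have "\<Delta> * \<bar>w $ j\<bar> = \<bar>det D * w $ j\<bar>" by (simp add: abs_mult detD)
      also have "\<dots> = \<bar>\<Sum>i<k. adj_mat D $$ (j,i) * (D *\<^sub>v w) $ i\<bar>" unfolding eq ..
      also have "\<dots> \<le> (\<Sum>i<k. \<bar>adj_mat D $$ (j,i) * (D *\<^sub>v w) $ i\<bar>)" by (rule sum_abs)
      also have "\<dots> \<le> (\<Sum>i<k. K1 * ?Q * ?s)"
      proof (rule sum_mono)
        fix i assume i: "i \<in> {..<k}"
        have "\<bar>adj_mat D $$ (j,i)\<bar> = \<bar>cofactor D i j\<bar>" using Dc i j by (simp add: adj_mat_def)
        also have "\<dots> \<le> K1 * ?Q" using cof i j by simp
        finally have a: "\<bar>adj_mat D $$ (j,i)\<bar> \<le> K1 * ?Q" .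
        show "\<bar>adj_mat D $$ (j,i) * (D *\<^sub>v w) $ i\<bar> \<le> K1 * ?Q * ?s"
          unfolding abs_mult by (rule mult_mono[OF a Dws], use i K1pos Qpos in auto)
      qed
      also have "\<dots> = real k * K1 * ?Q * ?s" by simp
      finally show ?thesis using Dpos by (simp add: pos_le_divide_eq mult.commute)
    qed
    have vb: "sup_norm v \<le> real k * K1 * ?Q * ?s / \<Delta>"
    proof (rule sup_norm_le)
      show "0 \<le> real k * K1 * ?Q * ?s / \<Delta>"
        using K1pos Qpos Dpos sup_norm_nonneg[of "M *\<^sub>v v"] by simp
      fix c assume c: "c < dim_vec v"
      then have cn: "c < n" using vc by simp
      show "\<bar>v $ c\<bar> \<le> real k * K1 * ?Q * ?s / \<Delta>"
      proof (cases "c \<in> J")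
        case True
        then obtain j where j: "j < k" "c = pick J j" using pbJ by (auto simp: bij_betw_def)
        have "v $ c = w $ j" using j by (simp add: w_def)
        then show ?thesis using wb[OF j(1)] by simp
      next
        case False
        then show ?thesis using v0[OF cn] K1pos Qpos Dpos sup_norm_nonneg[of "M *\<^sub>v v"] by simp
      qed
    qed
    have "sup_norm v * \<Delta> \<le> real k * K1 * ?Q * ?s" using vb Dpos by (simp add: pos_le_divide_eq)
    moreover have "sup_norm v * (?Q * ?L / c) \<le> sup_norm v * \<Delta>"
      by (rule mult_left_mono[OF Dbig sup_norm_nonneg])
    moreover have "sup_norm v * (?Q * ?L / c) = ?Q * (sup_norm v * ?L / c)" by simp
    moreover have "real k * K1 * ?Q * ?s = ?Q * (real k * K1 * ?s)" by simp
    ultimately have "?Q * (sup_norm v * ?L / c) \<le> ?Q * (real k * K1 * ?s)" by linarith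
    then have 1: "sup_norm v * ?L / c \<le> real k * K1 * ?s" using Qpos mult_le_cancel_left_pos by blast
    have kK: "real k * K1 > 0" using K1pos k1 by simp
    have "?L / (c * (real k * K1)) * sup_norm v = (sup_norm v * ?L / c) / (real k * K1)" by simp
    also have "\<dots> \<le> (real k * K1 * ?s) / (real k * K1)"
      by (rule divide_right_mono[OF 1], use kK in simp)
    also have "\<dots> = ?s" using kK by (metis nonzero_mult_div_cancel_left order_less_irrefl)
    finally show "?L / (real m ^ k * real n ^ k * (real k * (real n ^ (k-1) * fact (k-1)))) * sup_norm v \<le> ?s"
      unfolding c_def K1_def by simp
  qed
qed

end


context svd_set
begin

lemma part3:
  assumes k1: "1 \<le> k" and kn: "k \<le> n" and C: "C > 0"
    and small: "real n * real n * L (k-1) \<le> 1 / C"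
  shows "\<exists>X. subspace_dim n (n - k + 1) X \<and> (\<forall>x\<in>X. sup_norm (M *\<^sub>v x) \<le> sup_norm x / C)"
proof -
  have cT: "card {k-1..<n} = n - k + 1" using k1 kn by simp
  obtain X where X: "subspace_dim n (card {k-1..<n}) X"
    and Xm: "\<And>x. x \<in> X \<Longrightarrow> x \<in> carrier_vec n \<and> (\<forall>t<n. t \<notin> {k-1..<n} \<longrightarrow> col U t \<bullet> x = 0)"
  proof -
    have "{k-1..<n} \<subseteq> {..<n}" by auto
    from span_cols_dim[OF U UU this] show ?thesis using that by blast
  qed
  have Lk: "L (k-1) \<ge> 0" using Lnn k1 kn by simp
  show ?thesis
  proof (rule exI[of _ X], intro conjI ballI)
    show "subspace_dim n (n - k + 1) X" using X cT by simp
    fix x assume x: "x \<in> X"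
    have xc: "x \<in> carrier_vec n" and x0: "\<And>t. t < k-1 \<Longrightarrow> col U t \<bullet> x = 0"
      using Xm[OF x] k1 kn by auto
    define y where "y = transpose_mat U *\<^sub>v x"
    have yc: "y \<in> carrier_vec n" unfolding y_def using U xc by simp
    have yt: "t < n \<Longrightarrow> y $ t = col U t \<bullet> x" for t unfolding y_def using U by simp
    have xy: "U *\<^sub>v y = x"
    proof -
      have "U *\<^sub>v y = (U * transpose_mat U) *\<^sub>v x"
        unfolding y_def by (rule assoc_mult_mat_vec[symmetric], use U xc in auto)
      then show ?thesis using UUT xc by simp
    qed
    have Mx: "M *\<^sub>v x = N *\<^sub>v y"
    proof -
      have "M *\<^sub>v x = M *\<^sub>v (U *\<^sub>v y)" using xy by simp
      also have "\<dots> = (M * U) *\<^sub>v y" by (rule assoc_mult_mat_vec[symmetric], use M U yc in auto)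
      finally show ?thesis using Ndef by simp
    qed
    have ybound: "\<bar>y $ t\<bar> \<le> real n * sup_norm x" if t: "t < n" for t
    proof -
      have "y $ t = (\<Sum>i<n. U $$ (i,t) * x $ i)"
        using yt[OF t] U xc t by (simp add: scalar_prod_def lessThan_atLeast0)
      also have "\<bar>\<dots>\<bar> \<le> real (card {..<n}) * sup_norm x"
        by (rule sum_abs_bound, use F3 t xc sup_norm_ge[of _ x] in auto)
      finally show ?thesis by simp
    qed
    have "sup_norm (M *\<^sub>v x) \<le> real n * (L (k-1) * (real n * sup_norm x))"
    proof (rule sup_norm_le)
      show "0 \<le> real n * (L (k-1) * (real n * sup_norm x))" using Lk sup_norm_nonneg[of x] by simp
      fix r assume r: "r < dim_vec (M *\<^sub>v x)"
      then have rm: "r < m" using M by simp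
      have "(M *\<^sub>v x) $ r = (\<Sum>t<n. N $$ (r,t) * y $ t)"
        unfolding Mx using N yc rm by (simp add: scalar_prod_def lessThan_atLeast0)
      also have "\<bar>\<dots>\<bar> \<le> (\<Sum>t<n. \<bar>N $$ (r,t) * y $ t\<bar>)" by (rule sum_abs)
      also have "\<dots> \<le> (\<Sum>t<n. L (k-1) * (real n * sup_norm x))"
      proof (rule sum_mono)
        fix t assume t: "t \<in> {..<n}"
        show "\<bar>N $$ (r,t) * y $ t\<bar> \<le> L (k-1) * (real n * sup_norm x)"
        proof (cases "t < k-1")
          case True
          then have "y $ t = 0" using yt x0 t by auto
          then show ?thesis using Lk sup_norm_nonneg[of x] by simp
        next
          case False
          have "\<bar>N $$ (r,t)\<bar> \<le> L t" using F4 rm t by simp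
          also have "\<dots> \<le> L (k-1)" by (rule Lmono, use False t in auto)
          finally have a: "\<bar>N $$ (r,t)\<bar> \<le> L (k-1)" .
          show ?thesis unfolding abs_mult by (rule mult_mono[OF a ybound], use t Lk in auto)
        qed
      qed
      also have "\<dots> = real n * (L (k-1) * (real n * sup_norm x))" by simp
      finally show "\<bar>(M *\<^sub>v x) $ r\<bar> \<le> real n * (L (k-1) * (real n * sup_norm x))" .
    qed
    also have "\<dots> = (real n * real n * L (k-1)) * sup_norm x" by (simp add: mult_ac)
    also have "\<dots> \<le> (1 / C) * sup_norm x" by (rule mult_right_mono[OF small sup_norm_nonneg])
    also have "\<dots> = sup_norm x / C" by simp
    finally show "sup_norm (M *\<^sub>v x) \<le> sup_norm x / C" .
  qed
qed

end


lemma pow_le: "k \<le> n \<Longrightarrow> real m ^ k \<le> real (m+1) ^ n"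
proof -
  assume k: "k \<le> n"
  have "real m ^ k \<le> real (m+1) ^ k" by (rule power_mono, auto)
  also have "\<dots> \<le> real (m+1) ^ n" by (rule power_increasing[OF k], simp)
  finally show ?thesis .
qed

lemma den_le:
  assumes "1 \<le> k" "k \<le> m" "k \<le> n"
  shows "real m ^ k * real n ^ k * (real k * (real n ^ (k-1) * fact (k-1))) \<le>
    real (m+1) ^ n * real (n+1) ^ n * (real (n+1) * (real (n+1) ^ n * fact n))"
proof -
  have f: "(fact (k-1) :: real) \<le> fact n" by (rule fact_mono, use assms in simp)
  have 1: "real n ^ (k-1) \<le> real (n+1) ^ n" by (rule pow_le, use assms in simp)
  have 2: "real n ^ (k-1) * fact (k-1) \<le> real (n+1) ^ n * fact n"
    by (rule mult_mono[OF 1 f], auto)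
  have 3: "real k * (real n ^ (k-1) * fact (k-1)) \<le> real (n+1) * (real (n+1) ^ n * fact n)"
    by (rule mult_mono[OF _ 2], use assms in auto)
  have 4: "real m ^ k * real n ^ k \<le> real (m+1) ^ n * real (n+1) ^ n"
    by (rule mult_mono[OF pow_le pow_le], use assms in auto)
  show ?thesis by (rule mult_mono[OF 4 3], auto)
qed

lemma svd_exists:
  assumes M: "M \<in> carrier_mat m n" and sv: "singular_values M ls"
  shows "\<exists>U. svd_set m n M (M * U) U (\<lambda>i. ls ! i)"
proof -
  from sv have len: "length ls = n" and srt: "sorted_wrt (\<ge>) ls" and nn: "\<forall>l\<in>set ls. l \<ge> 0"
    and cp: "char_poly (transpose_mat M * M) = (\<Prod>l\<leftarrow>ls. [:- (l^2), 1:])"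
    using M by (auto simp: singular_values_def)
  let ?G = "transpose_mat M * M"
  have G: "?G \<in> carrier_mat n n" using M by auto
  have Gs: "transpose_mat ?G = ?G" using M by (simp add: transpose_mult[of _ n m _ n])
  have cp': "char_poly ?G = (\<Prod>e\<leftarrow>map (\<lambda>l. l^2) ls. [:- e, 1:])" using cp by (simp add: o_def)
  obtain U where U: "U \<in> carrier_mat n n" and UU: "transpose_mat U * U = 1\<^sub>m n"
    and UGU: "transpose_mat U * ?G * U = dmat n (map (\<lambda>l. l^2) ls)"
    using spectral[OF G Gs cp'] by auto
  have UUT: "U * transpose_mat U = 1\<^sub>m n" by (rule mat_mult_left_right_inverse[OF _ U UU], use U in simp)
  define N where "N = M * U"
  have Nc: "N \<in> carrier_mat m n" unfolding N_def using M U by auto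
  have NTN: "transpose_mat N * N = transpose_mat U * ?G * U"
  proof -
    have MT: "transpose_mat M \<in> carrier_mat n m" using M by simp
    have UT: "transpose_mat U \<in> carrier_mat n n" using U by simp
    have "transpose_mat N = transpose_mat U * transpose_mat M"
      unfolding N_def by (rule transpose_mult[OF M U])
    then have "transpose_mat N * N = transpose_mat U * transpose_mat M * (M * U)" unfolding N_def by simp
    also have "\<dots> = transpose_mat U * (transpose_mat M * (M * U))" by (rule assoc_mult_mat[OF UT MT Nc[unfolded N_def]])
    also have "transpose_mat M * (M * U) = ?G * U" by (rule assoc_mult_mat[OF MT M U, symmetric])
    also have "transpose_mat U * (?G * U) = transpose_mat U * ?G * U" by (rule assoc_mult_mat[OF UT G U, symmetric])
    finally show ?thesis .
  qed
  have NN: "(\<Sum>r<m. N $$ (r,i) * N $$ (r,j)) = (if i = j then (ls ! i)^2 else 0)" if i: "i < n" and j: "j < n" for i j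
  proof -
    have "(transpose_mat N * N) $$ (i,j) = row (transpose_mat N) i \<bullet> col N j"
      by (rule index_mult_mat(1), use Nc i j in auto)
    also have "\<dots> = (\<Sum>r<m. N $$ (r,i) * N $$ (r,j))"
      using Nc i j by (simp add: scalar_prod_def lessThan_atLeast0)
    finally have "(\<Sum>r<m. N $$ (r,i) * N $$ (r,j)) = (transpose_mat N * N) $$ (i,j)" by simp
    also have "\<dots> = dmat n (map (\<lambda>l. l^2) ls) $$ (i,j)" unfolding NTN UGU ..
    also have "\<dots> = (if i = j then (ls ! i)^2 else 0)" using i j len by (simp add: dmat_def)
    finally show ?thesis .
  qed
  have Lnn: "i < n \<Longrightarrow> ls ! i \<ge> 0" for i using nn len nth_mem by blast
  have Lmono: "ls ! j \<le> ls ! i" if "i \<le> j" "j < n" for i j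
  proof (cases "i = j")
    case False
    then show ?thesis using that srt len by (simp add: sorted_wrt_iff_nth_less)
  qed simp
  show ?thesis
    by (rule exI[of _ U], unfold_locales, use M U UU UUT NN Lnn Lmono in \<open>auto simp: N_def\<close>)
qed

theorem lemma3p2:
  fixes m n :: nat
  shows "\<exists>a A a' a''. a > 0 \<and> A > 0 \<and> a' > 0 \<and> a'' > 0 \<and>
    (\<forall>M ls k. M \<in> carrier_mat m n \<longrightarrow> singular_values M ls \<longrightarrow>
       1 \<le> k \<longrightarrow> k \<le> min m n \<longrightarrow>
       \<comment> \<open>(i)\<close>
       (a * (\<Prod>i<k. ls ! i) \<le> minors_norm M k \<and> minors_norm M k \<le> A * (\<Prod>i<k. ls ! i)) \<and>
       \<comment> \<open>(ii)\<close>
       (\<exists>J. J \<subseteq> {..<n} \<and> card J = k \<and>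
          (\<forall>v\<in>coord_span n J. sup_norm (M *\<^sub>v v) \<ge> a' * sup_norm v * ls ! (k - 1))) \<and>
       \<comment> \<open>(iii)\<close>
       (\<forall>C::real. C \<ge> 1 \<longrightarrow>
          (\<exists>X. subspace_dim n (n - k + 1) X \<and>
             (\<forall>x\<in>X. sup_norm (M *\<^sub>v x) \<le> sup_norm x / C)) \<or>
          (\<exists>J. J \<subseteq> {..<n} \<and> card J = k \<and>
             (\<forall>v\<in>coord_span n J. sup_norm (M *\<^sub>v v) \<ge> a'' / C * sup_norm v))))"
proof -
  define DEN where "DEN = real (m+1) ^ n * real (n+1) ^ n * (real (n+1) * (real (n+1) ^ n * fact n))"
  define a where "a = 1 / (real (m+1) ^ n * real (n+1) ^ n)"
  define A where "A = real (n+1) ^ n * fact n"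
  define a' where "a' = 1 / DEN"
  define a'' where "a'' = a' / (real (n+1) ^ 2)"
  have DEN: "DEN > 0" unfolding DEN_def by simp
  have apos: "a > 0" unfolding a_def by simp
  have Apos: "A > 0" unfolding A_def by simp
  have a'pos: "a' > 0" unfolding a'_def using DEN by simp
  have a''pos: "a'' > 0" unfolding a''_def using a'pos by simp
  show ?thesis
  proof (rule exI[of _ a], rule exI[of _ A], rule exI[of _ a'], rule exI[of _ a''],
      intro conjI allI impI apos Apos a'pos a''pos)
    fix M ls k assume M: "M \<in> carrier_mat m n" and sv: "singular_values M ls"
      and k1: "1 \<le> k" and kmn: "k \<le> min m n"
    have km: "k \<le> m" and kn: "k \<le> n" using kmn by auto
    obtain U where S: "svd_set m n M (M * U) U (\<lambda>i. ls ! i)" using svd_exists[OF M sv] by blast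
    interpret svd_set m n M "M * U" U "\<lambda>i. ls ! i" by (rule S)
    let ?P = "\<Prod>i<k. ls ! i"
    have Pnn: "?P \<ge> 0" by (rule prod_nonneg, use Lnn kn in auto)
    have mk: "real m ^ k * real n ^ k > 0" using km kn k1 by auto
    have mkle: "real m ^ k * real n ^ k \<le> real (m+1) ^ n * real (n+1) ^ n"
      by (rule mult_mono[OF pow_le pow_le], use kn in auto)
    show "a * ?P \<le> minors_norm M k"
    proof (cases "?P = 0")
      case True
      then show ?thesis using mn_nonneg[OF M km kn] by (metis mult_zero_right)
    next
      case False
      have Ppos: "?P > 0" using Pnn False by linarith
      from LB[OF km kn Ppos] obtain g f where g: "\<forall>i<k. g i < m" "inj_on g {..<k}"
        and f: "\<forall>j<k. f j < n" "inj_on f {..<k}"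
        and big: "\<bar>fmin M k g f\<bar> \<ge> ?P / (real m ^ k * real n ^ k)" by blast
      have "\<bar>fmin M k g f\<bar> \<le> minors_norm M k"
        by (rule mn_ge[OF M km kn g(2) _ f(2)], use g(1) f(1) in auto)
      moreover have "a * ?P \<le> ?P / (real m ^ k * real n ^ k)"
        unfolding a_def using divide_left_mono[OF mkle Pnn] mk by simp
      ultimately show ?thesis using big by linarith
    qed
    show "minors_norm M k \<le> A * ?P"
    proof (rule mn_le[OF M km kn])
      fix I J assume I: "I \<subseteq> {..<m}" "card I = k" and J: "J \<subseteq> {..<n}" "card J = k"
      have "det (submatrix M I J) = fmin M k (pick I) (pick J)"
        unfolding submatrix_eq[OF M I(1) J(1) I(2) J(2)] fmin_def ..
      moreover have "\<bar>fmin M k (pick I) (pick J)\<bar> \<le> real n ^ k * fact k * ?P"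
        by (rule UB[OF kn], use pick_lt[OF I(1)] pick_lt[OF J(1)] I J in auto)
      moreover have "real n ^ k * fact k * ?P \<le> A * ?P"
      proof (rule mult_right_mono[OF _ Pnn])
        have "real n ^ k \<le> real (n+1) ^ n" by (rule pow_le[OF kn])
        moreover have "(fact k :: real) \<le> fact n" by (rule fact_mono[OF kn])
        ultimately show "real n ^ k * fact k \<le> A" unfolding A_def by (intro mult_mono, auto)
      qed
      ultimately show "\<bar>det (submatrix M I J)\<bar> \<le> A * ?P" by linarith
    qed
    let ?L = "ls ! (k-1)"
    have Lk: "?L \<ge> 0" using Lnn k1 kn by simp
    define den where "den = real m ^ k * real n ^ k * (real k * (real n ^ (k-1) * fact (k-1)))"
    have "real n ^ (k-1) > 0" using kn k1 by simp
    moreover have "real k * fact (k-1) > 0" using k1 by simp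
    ultimately have den: "den > 0" unfolding den_def using mk
      by (metis mult_pos_pos mult.left_commute)
    have a'den: "a' \<le> 1 / den" unfolding a'_def
      by (rule divide_left_mono, unfold den_def DEN_def, rule den_le[OF k1 km kn], use den in \<open>auto simp: den_def\<close>)
    obtain J where J: "J \<subseteq> {..<n}" "card J = k"
      and Jb: "\<And>v. v \<in> coord_span n J \<Longrightarrow> sup_norm (M *\<^sub>v v) \<ge> ?L / den * sup_norm v"
      using part2[OF k1 km kn] unfolding den_def by blast
    have Jb': "sup_norm (M *\<^sub>v v) \<ge> a' * ?L * sup_norm v" if v: "v \<in> coord_span n J" for v
    proof -
      have "a' * ?L * sup_norm v \<le> (1 / den) * ?L * sup_norm v"
        by (rule mult_right_mono[OF mult_right_mono[OF a'den Lk] sup_norm_nonneg])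
      also have "\<dots> = ?L / den * sup_norm v" by simp
      finally show ?thesis using Jb[OF v] by linarith
    qed
    show "\<exists>J. J \<subseteq> {..<n} \<and> card J = k \<and>
          (\<forall>v\<in>coord_span n J. sup_norm (M *\<^sub>v v) \<ge> a' * sup_norm v * ls ! (k - 1))"
      by (rule exI[of _ J], use J Jb' in \<open>auto simp: mult_ac\<close>)
    fix C :: real assume C: "C \<ge> 1"
    show "(\<exists>X. subspace_dim n (n - k + 1) X \<and>
             (\<forall>x\<in>X. sup_norm (M *\<^sub>v x) \<le> sup_norm x / C)) \<or>
          (\<exists>J. J \<subseteq> {..<n} \<and> card J = k \<and>
             (\<forall>v\<in>coord_span n J. sup_norm (M *\<^sub>v v) \<ge> a'' / C * sup_norm v))"
    proof (cases "real n * real n * ?L \<le> 1 / C")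
      case True
      then show ?thesis using part3[OF k1 kn _ True] C by auto
    next
      case False
      have Cpos: "C > 0" using C by simp
      have nn1: "real n * real n \<le> real (n+1) ^ 2" by (simp add: power2_eq_square mult_mono)
      have npos: "real n * real n > 0" using kn k1 by simp
      have "1 / C < real n * real n * ?L" using False by simp
      then have "1 / C \<le> real (n+1) ^ 2 * ?L"
        using mult_right_mono[OF nn1 Lk] by linarith
      then have Lb: "a'' / C \<le> a' * ?L"
        unfolding a''_def using a'pos Cpos
        by (simp add: field_simps)
      show ?thesis
      proof (rule disjI2, rule exI[of _ J], intro conjI ballI J)
        fix v assume v: "v \<in> coord_span n J"
        have "a'' / C * sup_norm v \<le> a' * ?L * sup_norm v"
          by (rule mult_right_mono[OF Lb sup_norm_nonneg])
        then show "a'' / C * sup_norm v \<le> sup_norm (M *\<^sub>v v)" using Jb'[OF v] by linarith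
      qed
    qed
  qed
qed


end
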